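(* Let $\Gamma$ be an inhomogeneous $Y$-semigroup. Assume that $Y_1 \subseteq \mathcal{D}(A_\Gamma)$ and that $\Gamma$ is $Y_1$-super strongly $s$-continuous and $Y_1$-strongly $t$-continuous. Then \[ \frac{\partial}{\partial s} \Gamma(s,t)f=-A_\Gamma(s) \Gamma(s,t)f \qquad \forall (s,t) \in \Delta_J,\ \forall f \in Y_1 . \]
   Context: Let $(Y,\|\cdot\|)$ be a real separable Banach space and $(Y_1,\|\cdot\|_{Y_1})$ a real separable Banach space continuously embedded in $Y$ (i.e. $Y_1\subseteq Y$ and $\|f\|\le c_1\|f\|_{Y_1}$ for all $f\in Y_1$, for some constant $c_1$). $\mathcal B(Y)$ denotes the bounded linear operators on $Y$. $J$ is either $\mathbb{R}^+$ or $[0,T_\infty]$ for some $T_\infty>0$, and $\Delta_J=\{(s,t)\in J^2: s\le t\}$, $J(s)=\{t\in J: t\ge s\}$. An inhomogeneous $Y$-semigroup is a map $\Gamma:\Delta_J\to\mathcal B(Y)$ with $\Gamma(t,t)=I$ for all $t\in J$ and $\Gamma(s,r)\Gamma(r,t)=\Gamma(s,t)$ whenever $s\le r\le t$ in $J$. Its generator: for $t\in J$, $\mathcal D(A_\Gamma(t))$ is the set of $f\in Y$ such that $\lim_{h\downarrow0,\,t+h\in J}h^{-1}(\Gamma(t,t+h)-I)f$ and $\lim_{h\downarrow 0,\,t-h\in J}h^{-1}(\Gamma(t-h,t)-I)f$ exist in $Y$ and are equal, $A_\Gamma(t)f$ being this common value; $\mathcal D(A_\Gamma)=\bigcap_{t\in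 J}\mathcal D(A_\Gamma(t))$. All limits are in the $Y$-norm unless stated. $\Gamma$ is $Y_1$-strongly $t$-continuous if for every $f\in Y_1$ and $s\in J$ the map $u\mapsto\Gamma(s,u)f$ is continuous from $J(s)$ into $(Y,\|\cdot\|)$. $\Gamma$ is $Y_1$-super strongly $s$-continuous if $\Gamma(s,t)Y_1\subseteq Y_1$ for all $(s,t)\in\Delta_J$ and, for every $f\in Y_1$ and $t\in J$, the map $u\mapsto\Gamma(u,t)f$ is continuous on $\{u\in J:u\le t\}$ for the norm $\|\cdot\|_{Y_1}$. Derivatives at endpoints of the domain are one-sided. *)

theory Defs
  imports "HOL-Analysis.Analysis"
begin

text \<open>Y is the type 'y, Y1 is the type 'z, embedded into Y by a bounded linear
injection emb (continuous embedding). Separability = second countability.\<close>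

definition admissible_J :: "real set \<Rightarrow> bool" where
  "admissible_J J \<longleftrightarrow> J = {0..} \<or> (\<exists>T>0. J = {0..T})"

definition inhom_semigroup :: "real set \<Rightarrow> (real \<Rightarrow> real \<Rightarrow> 'y::real_normed_vector \<Rightarrow>\<^sub>L 'y) \<Rightarrow> bool" where
  "inhom_semigroup J \<Gamma> \<longleftrightarrow>
     (\<forall>t\<in>J. \<Gamma> t t = id_blinfun) \<and>
     (\<forall>s\<in>J. \<forall>r\<in>J. \<forall>t\<in>J. s \<le> r \<and> r \<le> t \<longrightarrow> \<Gamma> s r o\<^sub>L \<Gamma> r t = \<Gamma> s t)"

definition gen_limit :: "real set \<Rightarrow> (real \<Rightarrow> real \<Rightarrow> 'y::real_normed_vector \<Rightarrow>\<^sub>L 'y) \<Rightarrow> real \<Rightarrow> 'y \<Rightarrow> 'y \<Rightarrow> bool" where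
  "gen_limit J \<Gamma> t f L \<longleftrightarrow>
     ((\<lambda>h. (1/h) *\<^sub>R (\<Gamma> t (t+h) f - f)) \<longlongrightarrow> L) (at 0 within {h. 0 < h \<and> t + h \<in> J}) \<and>
     ((\<lambda>h. (1/h) *\<^sub>R (\<Gamma> (t-h) t f - f)) \<longlongrightarrow> L) (at 0 within {h. 0 < h \<and> t - h \<in> J})"

definition gen_dom_at :: "real set \<Rightarrow> (real \<Rightarrow> real \<Rightarrow> 'y::real_normed_vector \<Rightarrow>\<^sub>L 'y) \<Rightarrow> real \<Rightarrow> 'y set" where
  "gen_dom_at J \<Gamma> t = {f. \<exists>L. gen_limit J \<Gamma> t f L}"

definition generator :: "real set \<Rightarrow> (real \<Rightarrow> real \<Rightarrow> 'y::real_normed_vector \<Rightarrow>\<^sub>L 'y) \<Rightarrow> real \<Rightarrow> 'y \<Rightarrow> 'y" where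
  "generator J \<Gamma> t f = (SOME L. gen_limit J \<Gamma> t f L)"

definition gen_dom :: "real set \<Rightarrow> (real \<Rightarrow> real \<Rightarrow> 'y::real_normed_vector \<Rightarrow>\<^sub>L 'y) \<Rightarrow> 'y set" where
  "gen_dom J \<Gamma> = (\<Inter>t\<in>J. gen_dom_at J \<Gamma> t)"

definition strongly_t_cont :: "real set \<Rightarrow> (real \<Rightarrow> real \<Rightarrow> 'y::real_normed_vector \<Rightarrow>\<^sub>L 'y) \<Rightarrow> ('z \<Rightarrow> 'y) \<Rightarrow> bool" where
  "strongly_t_cont J \<Gamma> emb \<longleftrightarrow>
     (\<forall>f s. s \<in> J \<longrightarrow> continuous_on {u\<in>J. s \<le> u} (\<lambda>u. \<Gamma> s u (emb f)))"

definition super_strongly_s_cont :: "real set \<Rightarrow> (real \<Rightarrow> real \<Rightarrow> 'y::real_normed_vector \<Rightarrow>\<^sub>L 'y) \<Rightarrow> ('z::topological_space \<Rightarrow> 'y) \<Rightarrow> bool" where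
  "super_strongly_s_cont J \<Gamma> emb \<longleftrightarrow>
     (\<forall>s\<in>J. \<forall>t\<in>J. s \<le> t \<longrightarrow> (\<lambda>y. \<Gamma> s t y) ` range emb \<subseteq> range emb) \<and>
     (\<forall>f t. t \<in> J \<longrightarrow> (\<exists>g. (\<forall>u\<in>{u\<in>J. u \<le> t}. emb (g u) = \<Gamma> u t (emb f))
                              \<and> continuous_on {u\<in>J. u \<le> t} g))"

end

theory Submission
  imports Defs
begin
lemma bs:
  fixes T :: "nat \<Rightarrow> 'z::banach \<Rightarrow> 'y::real_normed_vector"
  assumes lin: "\<And>n. bounded_linear (T n)" and pb: "\<And>z. \<exists>B. \<forall>n. norm (T n z) \<le> B"
  shows "\<exists>M. \<forall>n z. norm (T n z) \<le> M * norm z"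
proof -
  define F where "F k = {z. \<forall>n. norm (T n z) \<le> real k}" for k :: nat
  have cl: "closed (F k)" for k
  proof -
    have "F k = (\<Inter>n. {z. norm (T n z) \<le> real k})" by (auto simp: F_def)
    moreover have "closed {z. norm (T n z) \<le> real k}" for n
      by (intro closed_Collect_le continuous_on_norm linear_continuous_on lin continuous_on_const)
    ultimately show ?thesis by auto
  qed
  have un: "\<Union>(range F) = UNIV"
  proof -
    have "z \<in> \<Union>(range F)" for z
    proof -
    obtain B where B: "\<forall>n. norm (T n z) \<le> B" using pb by blast
    obtain k :: nat where "B \<le> real k" using real_arch_simple by blast
    then have "z \<in> F k" using B by (auto simp: F_def intro: order_trans)
    then show "z \<in> \<Union>(range F)" by blast
    qed
    then show ?thesis by auto
  qed
  have "\<exists>k. interior (F k) \<noteq> {}"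
  proof (rule ccontr)
    assume "\<not> ?thesis"
    then have "euclidean interior_of \<Union>(range F) = {}"
      by (intro Baire_category_alt) (auto simp: completely_metrizable_space_euclidean cl)
    then show False using un by simp
  qed
  then obtain k x0 where "x0 \<in> interior (F k)" by blast
  then obtain r where r: "r > 0" "ball x0 r \<subseteq> F k" using open_contains_ball by (metis interior_def mem_Collect_eq open_interior interior_subset subset_trans)
  have x0: "norm (T n x0) \<le> k" for n using r centre_in_ball[of x0 r] unfolding F_def by blast
  show ?thesis
  proof (intro exI allI)
    fix n z
    show "norm (T n z) \<le> (4 * k / r) * norm z"
    proof (cases "z = 0")
      case True then show ?thesis using linear_0[OF bounded_linear.linear[OF lin]] by simp
    next
      case False
      define c where "c = r / (2 * norm z)"
      have c: "c > 0" using False r by (simp add: c_def)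
      have "norm (c *\<^sub>R z) = r/2" using False r by (simp add: c_def)
      then have "x0 + c *\<^sub>R z \<in> ball x0 r" using r by (simp add: dist_norm)
      then have a: "norm (T n (x0 + c *\<^sub>R z)) \<le> k" using r by (auto simp: F_def)
      have "T n (x0 + c *\<^sub>R z) = T n x0 + c *\<^sub>R T n z"
        using bounded_linear.linear[OF lin[of n]] by (simp add: linear_add linear_scale)
      then have "c *\<^sub>R T n z = T n (x0 + c *\<^sub>R z) - T n x0" by simp
      then have "norm (c *\<^sub>R T n z) \<le> norm (T n (x0 + c *\<^sub>R z)) + norm (T n x0)"
        by (metis norm_triangle_ineq4)
      also have "\<dots> \<le> 2 * k" using a x0[of n] by simp
      finally have "c * norm (T n z) \<le> 2 * k" using c by simp
      then have "norm (T n z) \<le> 2 * k / c" using c by (simp add: field_simps)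
      also have "2 * k / c = (4 * k / r) * norm z" using False r by (simp add: c_def field_simps)
      finally show ?thesis .
    qed
  qed
qed
lemma within_minus_self:
  fixes f :: "real \<Rightarrow> 'y::topological_space"
  shows "(f \<longlongrightarrow> l) (at x within S) \<longleftrightarrow> (f \<longlongrightarrow> l) (at x within (S - {x}))"
  unfolding tendsto_at_iff_sequentially by auto

lemma shift_right:
  fixes F :: "real \<Rightarrow> 'y::topological_space"
  shows "((\<lambda>h. F (s+h)) \<longlongrightarrow> L) (at 0 within {h. s+h \<in> A}) \<longleftrightarrow> (F \<longlongrightarrow> L) (at s within A)"
proof
  assume H: "((\<lambda>h. F (s+h)) \<longlongrightarrow> L) (at 0 within {h. s+h \<in> A})"
  show "(F \<longlongrightarrow> L) (at s within A)"
    unfolding tendsto_at_iff_sequentially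
  proof (intro allI impI)
    fix X assume X: "\<forall>i. X i \<in> A - {s}" "X \<longlonglongrightarrow> s"
    have "(\<lambda>i. X i - s) \<longlonglongrightarrow> s - s" by (intro tendsto_intros X)
    then have "((\<lambda>h. F (s+h)) \<circ> (\<lambda>i. X i - s)) \<longlonglongrightarrow> L"
      using H X(1) unfolding tendsto_at_iff_sequentially by auto
    then show "(F \<circ> X) \<longlonglongrightarrow> L" by (simp add: comp_def)
  qed
next
  assume H: "(F \<longlongrightarrow> L) (at s within A)"
  show "((\<lambda>h. F (s+h)) \<longlongrightarrow> L) (at 0 within {h. s+h \<in> A})"
    unfolding tendsto_at_iff_sequentially
  proof (intro allI impI)
    fix X assume X: "\<forall>i. X i \<in> {h. s+h \<in> A} - {0}" "X \<longlonglongrightarrow> 0"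
    have "(\<lambda>i. s + X i) \<longlonglongrightarrow> s + 0" by (intro tendsto_intros X)
    then have "(F \<circ> (\<lambda>i. s + X i)) \<longlonglongrightarrow> L"
      using H X(1) unfolding tendsto_at_iff_sequentially by auto
    then show "((\<lambda>h. F (s+h)) \<circ> X) \<longlonglongrightarrow> L" by (simp add: comp_def)
  qed
qed

lemma shift_left:
  fixes F :: "real \<Rightarrow> 'y::topological_space"
  assumes H: "((\<lambda>h. F (s-h)) \<longlongrightarrow> L) (at 0 within {h. s-h \<in> A})"
  shows "(F \<longlongrightarrow> L) (at s within A)"
    unfolding tendsto_at_iff_sequentially
  proof (intro allI impI)
    fix X assume X: "\<forall>i. X i \<in> A - {s}" "X \<longlonglongrightarrow> s"
    have "(\<lambda>i. s - X i) \<longlonglongrightarrow> s - s" by (intro tendsto_intros X)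
    moreover have "\<forall>i. (\<lambda>i. s - X i) i \<in> {h. s-h \<in> A} - {0}" using X(1) by auto
    ultimately have "((\<lambda>h. F (s-h)) \<circ> (\<lambda>i. s - X i)) \<longlonglongrightarrow> L"
      using H unfolding tendsto_at_iff_sequentially by simp
    then show "(F \<circ> X) \<longlonglongrightarrow> L" by (simp add: comp_def)
  qed

lemma key:
  fixes T :: "real \<Rightarrow> 'z::banach \<Rightarrow> 'y::real_normed_vector" and d :: "real \<Rightarrow> 'z"
  assumes lin: "\<And>h. bounded_linear (T h)"
    and conv: "\<And>z. \<exists>L. ((\<lambda>h. T h z) \<longlongrightarrow> L) (at 0 within S)"
    and d: "(d \<longlongrightarrow> 0) (at 0 within S)"
  shows "((\<lambda>h. T h (d h)) \<longlongrightarrow> 0) (at 0 within S)"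
  unfolding tendsto_at_iff_sequentially
proof (intro allI impI)
  fix X assume X: "\<forall>i. X i \<in> S - {0}" "X \<longlonglongrightarrow> 0"
  have "\<exists>B. \<forall>n. norm (T (X n) z) \<le> B" for z
  proof -
    obtain L where L: "((\<lambda>h. T h z) \<longlongrightarrow> L) (at 0 within S)" using conv by blast
    then have "((\<lambda>h. T h z) \<circ> X) \<longlonglongrightarrow> L" using X unfolding tendsto_at_iff_sequentially by blast
    then have "Bseq ((\<lambda>h. T h z) \<circ> X)" by (rule convergent_imp_Bseq[OF convergentI])
    then show ?thesis unfolding Bseq_def by (auto simp: comp_def)
  qed
  then obtain M where M: "\<And>n z. norm (T (X n) z) \<le> M * norm z"
    using bs[of "\<lambda>n. T (X n)"] lin by blast
  have "(d \<circ> X) \<longlonglongrightarrow> 0" using d X unfolding tendsto_at_iff_sequentially by blast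
  then have "(\<lambda>n. M * norm (d (X n))) \<longlonglongrightarrow> 0"
    by (intro tendsto_mult_right_zero tendsto_norm_zero) (simp add: comp_def)
  then show "((\<lambda>h. T h (d h)) \<circ> X) \<longlonglongrightarrow> 0"
    by (rule Lim_null_comparison[rotated]) (auto simp: M)
qed

lemma vd_from_quot:
  fixes f :: "real \<Rightarrow> 'y::real_normed_vector"
  assumes H: "((\<lambda>y. (1/(y-x)) *\<^sub>R (f y - f x)) \<longlongrightarrow> D) (at x within S)"
  shows "(f has_vector_derivative D) (at x within S)"
  unfolding has_vector_derivative_def has_derivative_within
proof (intro conjI bounded_linear_scaleR_left)
  have "((\<lambda>y. (1/(y-x)) *\<^sub>R (f y - f x) - D) \<longlongrightarrow> 0) (at x within S)"
    using H by (simp add: LIM_zero)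
  then have A: "((\<lambda>y. norm ((1/(y-x)) *\<^sub>R (f y - f x) - D)) \<longlongrightarrow> 0) (at x within S)"
    by (rule tendsto_norm_zero)
  have "\<forall>\<^sub>F y in at x within S. norm ((1/(y-x)) *\<^sub>R (f y - f x) - D) =
          norm ((1 / norm (y - x)) *\<^sub>R (f y - (f x + (y - x) *\<^sub>R D)))"
  proof -
    have "norm ((1/(y-x)) *\<^sub>R (f y - f x) - D) =
          norm ((1 / norm (y - x)) *\<^sub>R (f y - (f x + (y - x) *\<^sub>R D)))" if "y \<noteq> x" for y
    proof -
      have "(1/(y-x)) *\<^sub>R ((y - x) *\<^sub>R D) = D" using that by simp
      moreover have "(1/(y-x)) *\<^sub>R (f y - (f x + (y - x) *\<^sub>R D)) = (1/(y-x)) *\<^sub>R (f y - f x) - (1/(y-x)) *\<^sub>R ((y - x) *\<^sub>R D)"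
        by (simp add: algebra_simps)
      ultimately have "(1/(y-x)) *\<^sub>R (f y - f x) - D = (1/(y-x)) *\<^sub>R (f y - (f x + (y - x) *\<^sub>R D))"
        by simp
      then show ?thesis by simp
    qed
    then show ?thesis by (auto simp: eventually_at_filter)
  qed
  with A have "((\<lambda>y. norm ((1 / norm (y - x)) *\<^sub>R (f y - (f x + (y - x) *\<^sub>R D)))) \<longlongrightarrow> 0) (at x within S)"
    using tendsto_cong by fastforce
  then show "((\<lambda>y. (1 / norm (y - x)) *\<^sub>R (f y - (f x + (y - x) *\<^sub>R D))) \<longlongrightarrow> 0) (at x within S)"
    by (rule tendsto_norm_zero_cancel)
qed

theorem theorem2p6:
  fixes J :: "real set"
    and \<Gamma> :: "real \<Rightarrow> real \<Rightarrow> ('y::{banach,second_countable_topology} \<Rightarrow>\<^sub>L 'y)"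
    and emb :: "'z::{banach,second_countable_topology} \<Rightarrow> 'y"
  assumes "admissible_J J"
    and "bounded_linear emb" and "inj emb"
    and "inhom_semigroup J \<Gamma>"
    and "range emb \<subseteq> gen_dom J \<Gamma>"
    and "super_strongly_s_cont J \<Gamma> emb"
    and "strongly_t_cont J \<Gamma> emb"
  shows "\<forall>s\<in>J. \<forall>t\<in>J. \<forall>f. s \<le> t \<longrightarrow>
           ((\<lambda>u. \<Gamma> u t (emb f)) has_vector_derivative
              (- generator J \<Gamma> s (\<Gamma> s t (emb f)))) (at s within {u\<in>J. u \<le> t})"
proof (intro ballI allI impI)
  fix s t f assume sJ: "s \<in> J" and tJ: "t \<in> J" and st: "s \<le> t"
  have comp: "\<Gamma> a b (\<Gamma> b c y) = \<Gamma> a c y" if "a \<in> J" "b \<in> J" "c \<in> J" "a \<le> b" "b \<le> c" for a b c y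
    using assms(4) that unfolding inhom_semigroup_def by (metis blinfun_apply_blinfun_compose)
  have gen: "gen_limit J \<Gamma> r (emb z) (generator J \<Gamma> r (emb z))" if "r \<in> J" for r z
  proof -
    have "emb z \<in> gen_dom_at J \<Gamma> r" using assms(5) that unfolding gen_dom_def by blast
    then show ?thesis unfolding gen_dom_at_def generator_def by (auto intro: someI_ex)
  qed
  have "\<forall>f t. t \<in> J \<longrightarrow> (\<exists>g. (\<forall>u\<in>{u\<in>J. u \<le> t}. emb (g u) = \<Gamma> u t (emb f))
                              \<and> continuous_on {u\<in>J. u \<le> t} g)"
    using assms(6) unfolding super_strongly_s_cont_def by (rule conjunct2)
  then obtain g where g0: "\<forall>u\<in>{u\<in>J. u \<le> t}. emb (g u) = \<Gamma> u t (emb f)"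
    and gc: "continuous_on {u\<in>J. u \<le> t} g"
    using tJ by blast
  have g: "\<And>u. u \<in> {u\<in>J. u \<le> t} \<Longrightarrow> emb (g u) = \<Gamma> u t (emb f)" using g0 by blast
  define x where "x = \<Gamma> s t (emb f)"
  have x: "x = emb (g s)" using g sJ st by (simp add: x_def)
  define D where "D = generator J \<Gamma> s x"
  have GL: "gen_limit J \<Gamma> s x D" using gen[OF sJ, of "g s"] by (simp add: x D_def)
  define S where "S = {u\<in>J. u \<le> t}"
  define Q where "Q u = (1/(u-s)) *\<^sub>R (\<Gamma> u t (emb f) - \<Gamma> s t (emb f))" for u
  define A1 where "A1 = {u\<in>S. s < u}"
  define A2 where "A2 = {u\<in>S. u < s}"
  have lin: "bounded_linear (\<lambda>z. (1/h) *\<^sub>R (\<Gamma> s (s+h) (emb z) - emb z))" for h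
    by (intro bounded_linear_const_scaleR bounded_linear_sub
        bounded_linear_compose[OF blinfun.bounded_linear_right assms(2)] assms(2))
  have R: "(Q \<longlongrightarrow> -D) (at s within A1)"
  proof -
    define S1 where "S1 = {h. s + h \<in> A1}"
    define T where "T h z = (1/h) *\<^sub>R (\<Gamma> s (s+h) (emb z) - emb z)" for h z
    have conv: "\<exists>L. ((\<lambda>h. T h z) \<longlongrightarrow> L) (at 0 within S1)" for z
    proof -
      have "((\<lambda>h. T h z) \<longlongrightarrow> generator J \<Gamma> s (emb z)) (at 0 within {h. 0 < h \<and> s + h \<in> J})"
        using gen[OF sJ, of z] unfolding gen_limit_def T_def by blast
      moreover have "S1 \<subseteq> {h. 0 < h \<and> s + h \<in> J}" by (auto simp: S1_def A1_def S_def)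
      ultimately show ?thesis by (blast intro: tendsto_within_subset)
    qed
    have "(g \<longlongrightarrow> g s) (at s within S)"
      using gc sJ st unfolding S_def continuous_on_def by auto
    then have "(g \<longlongrightarrow> g s) (at s within A1)"
      by (rule tendsto_within_subset) (auto simp: A1_def)
    then have "((\<lambda>h. g (s+h)) \<longlongrightarrow> g s) (at 0 within S1)"
      unfolding S1_def by (simp add: shift_right)
    then have d: "((\<lambda>h. g (s+h) - g s) \<longlongrightarrow> 0) (at 0 within S1)"
      by (simp add: LIM_zero)
    have K: "((\<lambda>h. T h (g (s+h) - g s)) \<longlongrightarrow> 0) (at 0 within S1)"
      by (rule key[OF _ conv d]) (simp add: T_def lin)
    have "((\<lambda>h. T h (g s)) \<longlongrightarrow> D) (at 0 within {h. 0 < h \<and> s + h \<in> J})"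
      using GL unfolding gen_limit_def T_def x by blast
    then have "((\<lambda>h. T h (g s)) \<longlongrightarrow> D) (at 0 within S1)"
      by (rule tendsto_within_subset) (auto simp: S1_def A1_def S_def)
    with K have lim1: "((\<lambda>h. - (T h (g (s+h) - g s) + T h (g s))) \<longlongrightarrow> - (0 + D)) (at 0 within S1)"
      by (intro tendsto_intros)
    have eq: "Q (s+h) = - (T h (g (s+h) - g s) + T h (g s))" if "h \<in> S1" for h
    proof -
      have h: "s + h \<in> J" "s + h \<le> t" "0 < h" using that by (auto simp: S1_def A1_def S_def)
      have e: "emb (g (s+h)) = \<Gamma> (s+h) t (emb f)" using g h by auto
      have "T h (g (s+h) - g s) + T h (g s) = T h (g (s+h))"
        using linear_add[OF bounded_linear.linear[OF lin[of h]], of "g (s+h) - g s" "g s"]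
        by (simp add: T_def)
      also have "\<dots> = (1/h) *\<^sub>R (\<Gamma> s t (emb f) - \<Gamma> (s+h) t (emb f))"
        unfolding T_def e using comp[OF sJ h(1) tJ _ h(2)] h(3) by simp
      also have "\<dots> = - Q (s+h)" unfolding Q_def by (simp add: algebra_simps)
      finally show ?thesis by simp
    qed
    have ev: "\<forall>\<^sub>F h in at 0 within S1. - (T h (g (s+h) - g s) + T h (g s)) = Q (s+h)"
      unfolding eventually_at_filter by (intro always_eventually allI impI) (rule eq[symmetric])
    have "((\<lambda>h. Q (s+h)) \<longlongrightarrow> - (0 + D)) (at 0 within S1)"
      by (rule Lim_transform_eventually[OF lim1 ev])
    then have "((\<lambda>h. Q (s+h)) \<longlongrightarrow> -D) (at 0 within S1)" by simp
    then show ?thesis unfolding S1_def by (simp add: shift_right)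
  qed
  have L: "(Q \<longlongrightarrow> -D) (at s within A2)"
  proof (rule shift_left)
    define S2 where "S2 = {h. s - h \<in> A2}"
    have "((\<lambda>h. (1/h) *\<^sub>R (\<Gamma> (s-h) s x - x)) \<longlongrightarrow> D) (at 0 within {h. 0 < h \<and> s - h \<in> J})"
      using GL unfolding gen_limit_def by blast
    then have "((\<lambda>h. (1/h) *\<^sub>R (\<Gamma> (s-h) s x - x)) \<longlongrightarrow> D) (at 0 within S2)"
      by (rule tendsto_within_subset) (auto simp: S2_def A2_def S_def)
    then have lim2: "((\<lambda>h. - ((1/h) *\<^sub>R (\<Gamma> (s-h) s x - x))) \<longlongrightarrow> -D) (at 0 within S2)"
      by (intro tendsto_intros)
    have eq: "Q (s-h) = - ((1/h) *\<^sub>R (\<Gamma> (s-h) s x - x))" if "h \<in> S2" for h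
    proof -
      have h: "s - h \<in> J" "0 < h" using that by (auto simp: S2_def A2_def S_def)
      have "\<Gamma> (s-h) t (emb f) = \<Gamma> (s-h) s x"
        unfolding x_def using comp[OF h(1) sJ tJ _ st] h(2) by simp
      then show ?thesis unfolding Q_def x_def using h(2)
        by (simp add: algebra_simps)
    qed
    have ev: "\<forall>\<^sub>F h in at 0 within S2. - ((1/h) *\<^sub>R (\<Gamma> (s-h) s x - x)) = Q (s-h)"
      unfolding eventually_at_filter by (intro always_eventually allI impI) (rule eq[symmetric])
    show "((\<lambda>h. Q (s-h)) \<longlongrightarrow> -D) (at 0 within {h. s - h \<in> A2})"
      unfolding S2_def[symmetric] by (rule Lim_transform_eventually[OF lim2 ev])
  qed
  have "(Q \<longlongrightarrow> -D) (at s within (A1 \<union> A2))" using R L by (simp add: Lim_within_Un)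
  moreover have "A1 \<union> A2 = S - {s}" by (auto simp: A1_def A2_def)
  ultimately have "(Q \<longlongrightarrow> -D) (at s within S)" by (simp add: within_minus_self[of _ _ s S])
  then show "((\<lambda>u. \<Gamma> u t (emb f)) has_vector_derivative - generator J \<Gamma> s (\<Gamma> s t (emb f)))
          (at s within {u\<in>J. u \<le> t})"
    unfolding S_def Q_def D_def x_def by (rule vd_from_quot)
qed

end
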